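(* Let $n\ge2$ be an integer, $\sigma\ge0$, $R'>0$, and define $a_1=\frac{n}{2R'}$, $a_2=\frac{a_1}{n-1}$, $a_k=\min\big\{(1+\frac1{n-1})a_{k-1},\frac{\sqrt{n(n+\sigma A_{k-1})}}{2R'}\big\}$ for $k\ge3$, where $A_k=\sum_{i=1}^ka_i$. Let $K_0=\big\lceil\frac{\log n}{\log n-\log(n-1)}\big\rceil$. Then for all $k\ge K_0$, $A_k\ge\frac{n(k-K_0+n-1)}{2R'}$. *)

theory Defs
  imports "HOL-Analysis.Analysis"
begin

text \<open>aA n sigma R k = (a_k, A_k) for k \<ge> 1, with A_k = a_1 + ... + a_k.
  Index 0 is a dummy (a_0 = 0, A_0 = 0).\<close>
fun aA :: "nat \<Rightarrow> real \<Rightarrow> real \<Rightarrow> nat \<Rightarrow> real \<times> real" where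
  "aA n \<sigma> R 0 = (0, 0)"
| "aA n \<sigma> R (Suc 0) = (real n / (2 * R), real n / (2 * R))"
| "aA n \<sigma> R (Suc (Suc 0)) =
     (let a1 = real n / (2 * R); a2 = a1 / (real n - 1) in (a2, a1 + a2))"
| "aA n \<sigma> R (Suc (Suc (Suc k))) =
     (let (ap, Ap) = aA n \<sigma> R (Suc (Suc k));
          ak = min ((1 + 1 / (real n - 1)) * ap)
                   (sqrt (real n * (real n + \<sigma> * Ap)) / (2 * R))
      in (ak, Ap + ak))"

definition seq_a :: "nat \<Rightarrow> real \<Rightarrow> real \<Rightarrow> nat \<Rightarrow> real" where
  "seq_a n \<sigma> R k = fst (aA n \<sigma> R k)"

definition seq_A :: "nat \<Rightarrow> real \<Rightarrow> real \<Rightarrow> nat \<Rightarrow> real" where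
  "seq_A n \<sigma> R k = (\<Sum>i=1..k. seq_a n \<sigma> R i)"

end

theory Submission
  imports Defs
begin

lemma snd_aA: "snd (aA n s R k) = seq_A n s R k"
proof (induction n s R k rule: aA.induct)
  case (4 n s R k)
  then show ?case
    by (simp add: Let_def split_def seq_A_def seq_a_def)
qed (simp_all add: Let_def seq_A_def seq_a_def numeral_2_eq_2)

lemma seq_A_Suc: "seq_A n s R (Suc k) = seq_A n s R k + seq_a n s R (Suc k)"
  by (simp add: seq_A_def)

lemma seq_a1: "seq_a n s R (Suc 0) = real n / (2*R)"
  by (simp add: seq_a_def)

lemma seq_a2: "seq_a n s R (Suc (Suc 0)) = real n / (2*R) / (real n - 1)"
  by (simp add: seq_a_def Let_def)

lemma seq_a3: "seq_a n s R (Suc (Suc (Suc k))) =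
   min ((1 + 1 / (real n - 1)) * seq_a n s R (Suc (Suc k)))
       (sqrt (real n * (real n + s * seq_A n s R (Suc (Suc k)))) / (2 * R))"
  by (simp add: seq_a_def Let_def split_def snd_aA[symmetric])

lemma seq_a_pos:
  assumes "n \<ge> 2" "s \<ge> 0" "R > 0"
  shows "k \<ge> 1 \<Longrightarrow> seq_a n s R k > 0"
proof (induction k rule: less_induct)
  case (less k)
  consider "k = 1" | "k = 2" | j where "k = Suc (Suc (Suc j))"
    using less.prems by (metis One_nat_def Suc_1 Suc_le_D not_less_eq_eq numeral_2_eq_2 le_antisym nat.exhaust)
  then show ?case
  proof cases
    case 1 then show ?thesis using assms by (simp add: seq_a1)
  next
    case 2 then show ?thesis using assms by (simp add: seq_a2 numeral_2_eq_2)
  next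
    case 3
    have p: "seq_a n s R (Suc (Suc j)) > 0" using less.IH 3 by simp
    have "seq_A n s R (Suc (Suc j)) \<ge> 0"
      unfolding seq_A_def using less.IH 3 by (intro sum_nonneg) (auto intro: less_imp_le)
    then have "real n * (real n + s * seq_A n s R (Suc (Suc j))) > 0"
      using assms by (simp add: add_pos_nonneg)
    then have "sqrt (real n * (real n + s * seq_A n s R (Suc (Suc j)))) / (2 * R) > 0"
      using assms by simp
    moreover have "(1 + 1 / (real n - 1)) * seq_a n s R (Suc (Suc j)) > 0"
      using p assms by (simp add: add_pos_nonneg)
    ultimately show ?thesis using 3 by (simp add: seq_a3)
  qed
qed

lemma seq_A_nonneg:
  assumes "n \<ge> 2" "s \<ge> 0" "R > 0"
  shows "seq_A n s R k \<ge> 0"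
  unfolding seq_A_def using seq_a_pos[OF assms] by (intro sum_nonneg) (auto intro: less_imp_le)

lemma seq_a_lower:
  assumes "n \<ge> 2" "s \<ge> 0" "R > 0"
  shows "seq_a n s R (Suc (Suc k)) \<ge> real n / (2*R) * min ((1 + 1 / (real n - 1)) ^ k / (real n - 1)) 1"
proof (induction k)
  case 0
  then show ?case using assms by (simp add: seq_a2)
next
  case (Suc k)
  let ?c = "real n / (2*R)" and ?q = "1 + 1 / (real n - 1)"
  have q: "?q \<ge> 1" using assms by simp
  have c: "?c > 0" using assms by simp
  have A: "seq_A n s R (Suc (Suc k)) \<ge> 0" using seq_A_nonneg[OF assms] .
  have "sqrt (real n * real n) \<le> sqrt (real n * (real n + s * seq_A n s R (Suc (Suc k))))"
    using A assms by (intro real_sqrt_le_mono) simp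
  then have s1: "?c \<le> sqrt (real n * (real n + s * seq_A n s R (Suc (Suc k)))) / (2 * R)"
    using assms by (simp add: divide_right_mono)
  have e: "?q ^ Suc k / (real n - 1) = ?q * (?q ^ k / (real n - 1))" by simp
  have m: "min (?q ^ Suc k / (real n - 1)) 1 \<le> min (?q * (?q ^ k / (real n - 1))) (?q * 1)"
    unfolding e using q by (intro min.mono) auto
  have "?c * min (?q ^ Suc k / (real n - 1)) 1 \<le> ?c * min (?q * (?q ^ k / (real n - 1))) (?q * 1)"
    using c m by (intro mult_left_mono) auto
  also have "\<dots> = ?q * (?c * min (?q ^ k / (real n - 1)) 1)"
    using q c by (simp only: min_mult_distrib_left if_True less_imp_le order_trans[OF zero_le_one q]) (simp add: ac_simps)
  also have "\<dots> \<le> ?q * seq_a n s R (Suc (Suc k))"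
    using Suc q by (intro mult_left_mono) auto
  finally have s2: "?c * min (?q ^ Suc k / (real n - 1)) 1 \<le> ?q * seq_a n s R (Suc (Suc k))" .
  have s3: "?c * min (?q ^ Suc k / (real n - 1)) 1 \<le> ?c" using c by (intro mult_left_le) (auto simp del: times_divide_eq_left times_divide_eq_right)
  show ?case using s1 s2 s3 by (simp add: seq_a3)
qed

lemma seq_A_lower1:
  assumes "n \<ge> 2" "s \<ge> 0" "R > 0"
  shows "seq_A n s R (Suc k) \<ge> real n / (2*R) * min ((1 + 1 / (real n - 1)) ^ k) (real n - 1)"
proof (induction k)
  case 0
  then show ?case using assms by (simp add: seq_A_def seq_a1 mult_left_le)
next
  case (Suc k)
  let ?c = "real n / (2*R)" and ?q = "1 + 1 / (real n - 1)"
  have c: "?c > 0" using assms by simp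
  have n1: "real n - 1 > 0" using assms by simp
  have a: "seq_a n s R (Suc (Suc k)) \<ge> ?c * min (?q ^ k / (real n - 1)) 1"
    using seq_a_lower[OF assms] .
  have ap: "seq_a n s R (Suc (Suc k)) > 0" using seq_a_pos[OF assms] by simp
  have eq: "seq_A n s R (Suc (Suc k)) = seq_A n s R (Suc k) + seq_a n s R (Suc (Suc k))"
    by (rule seq_A_Suc)
  show ?case
  proof (cases "?q ^ k \<ge> real n - 1")
    case True
    then have "seq_A n s R (Suc k) \<ge> ?c * (real n - 1)" using Suc by simp
    moreover have "?c * min (?q ^ Suc k) (real n - 1) \<le> ?c * (real n - 1)"
      using c by (intro mult_left_mono) auto
    ultimately show ?thesis using eq ap by linarith
  next
    case False
    then have h1: "seq_A n s R (Suc k) \<ge> ?c * ?q ^ k" using Suc by simp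
    have "?q ^ k / (real n - 1) < 1" using False n1 by simp
    then have h2: "seq_a n s R (Suc (Suc k)) \<ge> ?c * (?q ^ k / (real n - 1))" using a by simp
    have "?c * ?q ^ k + ?c * (?q ^ k / (real n - 1)) = ?c * ?q ^ Suc k"
      by (simp add: algebra_simps)
    moreover have "?c * min (?q ^ Suc k) (real n - 1) \<le> ?c * ?q ^ Suc k"
      using c by (intro mult_left_mono) auto
    ultimately show ?thesis using eq h1 h2 by linarith
  qed
qed

lemma K0_facts:
  assumes "n \<ge> (2::nat)"
  defines "K0 \<equiv> nat \<lceil>ln (real n) / (ln (real n) - ln (real n - 1))\<rceil>"
  shows "K0 \<ge> 1" "(1 + 1 / (real n - 1)) ^ (K0 - 1) \<ge> real n - 1"
proof -
  let ?q = "1 + 1 / (real n - 1)"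
  have n1: "real n - 1 > 0" using assms by simp
  have d: "ln (real n) - ln (real n - 1) > 0" using n1 by simp
  have lnn: "ln (real n) > 0" using assms by simp
  have x: "ln (real n) / (ln (real n) - ln (real n - 1)) > 0" using d lnn by simp
  have K: "real K0 \<ge> ln (real n) / (ln (real n) - ln (real n - 1))"
    unfolding K0_def using x by linarith
  then show "K0 \<ge> 1" using x by (cases K0) auto
  then have "real K0 * (ln (real n) - ln (real n - 1)) \<ge> ln (real n)"
    using K d by (simp add: pos_divide_le_eq)
  moreover have q: "?q = real n / (real n - 1)" using n1 by (simp add: field_simps)
  moreover have "ln ?q = ln (real n) - ln (real n - 1)"
    using q n1 by (simp add: ln_div)
  moreover have qp: "?q > 0" using n1 by (intro add_pos_pos) auto
  ultimately have "ln (?q ^ K0) \<ge> ln (real n)" by (simp add: ln_realpow)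
  then have qK: "?q ^ K0 \<ge> real n" using qp assms by simp
  have "?q ^ K0 = ?q * ?q ^ (K0 - 1)" using \<open>K0 \<ge> 1\<close> by (metis Suc_diff_1 less_le_trans zero_less_one power_Suc)
  then have "real n \<le> real n / (real n - 1) * ?q ^ (K0 - 1)" using qK q by simp
  moreover have gen: "real n - 1 \<le> Q" if h: "real n \<le> real n / (real n - 1) * Q" for Q
  proof -
    have "real n * (real n - 1) \<le> real n * Q" using h n1 by (simp add: field_simps)
    then show ?thesis using assms by simp
  qed
  ultimately show "?q ^ (K0 - 1) \<ge> real n - 1" by blast
qed

theorem proposition4:
  fixes n :: nat and \<sigma> R' :: real
  assumes "n \<ge> 2" and "\<sigma> \<ge> 0" and "R' > 0"
  defines "K0 \<equiv> nat \<lceil>ln (real n) / (ln (real n) - ln (real n - 1))\<rceil>"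
  shows "\<forall>k \<ge> K0. seq_A n \<sigma> R' k \<ge> real n * (real k - real K0 + real n - 1) / (2 * R')"
proof -
  let ?c = "real n / (2*R')" and ?q = "1 + 1 / (real n - 1)"
  have K1: "K0 \<ge> 1" and Kq: "?q ^ (K0 - 1) \<ge> real n - 1"
    using K0_facts[OF assms(1)] unfolding K0_def by auto
  have c: "?c > 0" using assms by simp
  have q1: "?q \<ge> 1" using assms by simp
  have base: "seq_A n \<sigma> R' K0 \<ge> ?c * (real n - 1)"
    using seq_A_lower1[OF assms(1-3), of "K0 - 1"] K1 Kq by simp
  have "seq_A n \<sigma> R' (K0 + j) \<ge> ?c * (real j + real n - 1)" for j
  proof (induction j)
    case 0 then show ?case using base by simp
  next
    case (Suc j)
    have "?q ^ (K0 - 1) \<le> ?q ^ (K0 + j - 1)" using q1 by (intro power_increasing) auto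
    then have "real n - 1 \<le> ?q ^ (K0 + j - 1)" using Kq by linarith
    then have "?q ^ (K0 + j - 1) / (real n - 1) \<ge> 1" using assms(1) by simp
    moreover have "seq_a n \<sigma> R' (Suc (Suc (K0 + j - 1))) \<ge> ?c * min (?q ^ (K0 + j - 1) / (real n - 1)) 1"
      using seq_a_lower[OF assms(1-3)] .
    moreover have "Suc (Suc (K0 + j - 1)) = Suc (K0 + j)" using K1 by simp
    ultimately have "seq_a n \<sigma> R' (Suc (K0 + j)) \<ge> ?c" by simp
    moreover have "?c * (real (Suc j) + real n - 1) = ?c * (real j + real n - 1) + ?c"
    proof -
      have "real (Suc j) + real n - 1 = (real j + real n - 1) + 1" by simp
      then show ?thesis by (simp only: distrib_left mult_1_right)
    qed
    ultimately show ?case using Suc seq_A_Suc[of n \<sigma> R' "K0 + j"] by simp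
  qed
  then show ?thesis
  proof (intro allI impI)
    fix k assume "k \<ge> K0"
    then obtain j where k: "k = K0 + j" using le_Suc_ex by blast
    assume H: "\<And>j. seq_A n \<sigma> R' (K0 + j) \<ge> ?c * (real j + real n - 1)"
    show "seq_A n \<sigma> R' k \<ge> real n * (real k - real K0 + real n - 1) / (2 * R')"
      using H[of j] k by simp
  qed
qed

end
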